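(* Let $\delta:\mathbb{R}\to\mathbb{R}$ be a posterior median function $x\mapsto\delta(x;w,b,c)$ for fixed $(w,b,c)$, and assume it is continuous and that there exist $t_1,t_2>0$ such that $\delta(x)=0$ if and only if $-t_2\le x\le t_1$, $\delta$ is strictly increasing on $(t_1,\infty)$ and on $(-\infty,-t_2)$, and $\delta$ maps $(t_1,\infty)$ onto $(0,\infty)$ and $(-\infty,-t_2)$ onto $(-\infty,0)$. Let $\delta^{-1}(t)$ for $t\ne0$ denote the inverse of $\delta$ restricted to $(t_1,\infty)\cup(-\infty,-t_2)$, and define the penalty $$\mathcal{P}(\theta)=\int_0^{\theta}\bigl(\delta^{-1}(t)-t\bigr)\,dt\ \ (\theta\ne0),\qquad \mathcal{P}(0)=0.$$ Then for every $x\in\mathbb{R}$, the minimizer of $\theta\mapsto\frac12(x-\theta)^2+\mathcal{P}(\theta)$ over $\theta\in\mathbb{R}$ is $\theta=\delta(x)$.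
   Context: Setting: $X\mid\mu\sim N(\mu,1)$ with prior $\mu\sim(1-w)\delta_0+w\,\gamma(\cdot;b,c)$, $\delta_0$ the point mass at $0$ and $\gamma(\cdot;b,c)$ a location-scale density with scale $b>0$ and location $c$; $\delta(x;w,b,c)$ is the posterior median of $\mu$ given $X=x$. The integral $\int_0^\theta$ for $\theta<0$ means $-\int_\theta^0$. *)

theory Defs
  imports "HOL-Probability.Probability"
begin

definition is_density :: "(real \<Rightarrow> real) \<Rightarrow> bool" where
  "is_density g \<longleftrightarrow> (\<forall>x. 0 \<le> g x) \<and> integrable lborel g \<and> integral\<^sup>L lborel g = 1"

definition gamma_ls :: "(real \<Rightarrow> real) \<Rightarrow> real \<Rightarrow> real \<Rightarrow> real \<Rightarrow> real" where
  "gamma_ls g b c mu = g ((mu - c) / b) / b"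

text \<open>Unnormalised posterior mass of a set A of values of mu given X = x under the prior
  (1-w) delta_0 + w gamma(.;b,c) and X | mu ~ N(mu,1).\<close>
definition post_mass ::
  "(real \<Rightarrow> real) \<Rightarrow> real \<Rightarrow> real \<Rightarrow> real \<Rightarrow> real \<Rightarrow> real set \<Rightarrow> real" where
  "post_mass g w b c x A =
     (1 - w) * std_normal_density x * indicator A 0
     + w * (LINT mu:A|lborel. gamma_ls g b c mu * std_normal_density (x - mu))"

definition is_posterior_median ::
  "(real \<Rightarrow> real) \<Rightarrow> real \<Rightarrow> real \<Rightarrow> real \<Rightarrow> real \<Rightarrow> real \<Rightarrow> bool" where
  "is_posterior_median g w b c x m \<longleftrightarrow>
     post_mass g w b c x {..m} \<ge> post_mass g w b c x UNIV / 2 \<and>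
     post_mass g w b c x {m..} \<ge> post_mass g w b c x UNIV / 2"

definition delta_inv :: "(real \<Rightarrow> real) \<Rightarrow> real \<Rightarrow> real \<Rightarrow> real \<Rightarrow> real" where
  "delta_inv \<delta> t1 t2 t = the_inv_into ({t1<..} \<union> {..< -t2}) \<delta> t"

definition penalty :: "(real \<Rightarrow> real) \<Rightarrow> real \<Rightarrow> real \<Rightarrow> real \<Rightarrow> real" where
  "penalty \<delta> t1 t2 \<theta> =
     (if \<theta> = 0 then 0
      else if 0 < \<theta> then integral {0..\<theta>} (\<lambda>t. delta_inv \<delta> t1 t2 t - t)
      else - integral {\<theta>..0} (\<lambda>t. delta_inv \<delta> t1 t2 t - t))"

end

theory Submission
  imports Defs
begin


lemma int_le_interior:
  fixes f :: "real \<Rightarrow> real"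
  assumes ab: "a \<le> b" and fi: "f integrable_on {a..b}" and le: "\<And>t. a < t \<Longrightarrow> t < b \<Longrightarrow> f t \<le> c"
  shows "integral {a..b} f \<le> c * (b - a)"
proof -
  define g where "g t = (if t \<in> {a<..<b} then f t else c)" for t
  have gf: "\<And>t. t \<in> box a b \<Longrightarrow> g t = f t" by (simp add: g_def)
  have gi: "g integrable_on {a..b}"
    using integrable_spike_interior[of a b g f] gf fi by simp
  have "integral {a..b} f = integral {a..b} g"
    using has_integral_spike_interior[of f "integral {a..b} f" a b g] gf fi
    by (simp add: integrable_integral integral_unique)
  also have "\<dots> \<le> integral {a..b} (\<lambda>t. c)"
    by (rule integral_le[OF gi]) (auto simp: g_def le)
  also have "\<dots> = c * (b - a)" using ab by simp
  finally show ?thesis .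
qed

lemma int_ge_interior:
  fixes f :: "real \<Rightarrow> real"
  assumes ab: "a \<le> b" and fi: "f integrable_on {a..b}" and le: "\<And>t. a < t \<Longrightarrow> t < b \<Longrightarrow> c \<le> f t"
  shows "c * (b - a) \<le> integral {a..b} f"
proof -
  have "integral {a..b} (\<lambda>t. - f t) \<le> (-c) * (b - a)"
    by (rule int_le_interior[OF ab]) (use fi le in \<open>auto simp: integrable_neg\<close>)
  then show ?thesis by simp
qed

lemma int_neg:
  fixes f :: "real \<Rightarrow> real"
  assumes ab: "a < b" and fi: "f integrable_on {a..b}" and mo: "\<And>s t. a < s \<Longrightarrow> s \<le> t \<Longrightarrow> t < b \<Longrightarrow> f s \<le> f t"
    and ng: "\<And>t. a < t \<Longrightarrow> t < b \<Longrightarrow> f t < 0"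
  shows "integral {a..b} f < 0"
proof -
  define m where "m = (a + b) / 2"
  have m: "a < m" "m < b" using ab by (auto simp: m_def)
  have "integral {a..m} f + integral {m..b} f = integral {a..b} f"
    using Henstock_Kurzweil_Integration.integral_combine[where a=a and c=m and b=b and f=f] m fi by auto
  moreover have "integral {a..m} f \<le> f m * (m - a)"
    by (rule int_le_interior) (use m fi mo in \<open>auto intro: integrable_on_subinterval\<close>)
  moreover have "integral {m..b} f \<le> 0 * (b - m)"
    by (rule int_le_interior) (use m fi ng in \<open>auto intro: integrable_on_subinterval less_imp_le\<close>)
  moreover have "f m * (m - a) < 0" using ng[of m] m by (simp add: mult_neg_pos)
  ultimately show ?thesis by linarith
qed

lemma int_pos:
  fixes f :: "real \<Rightarrow> real"
  assumes ab: "a < b" and fi: "f integrable_on {a..b}" and mo: "\<And>s t. a < s \<Longrightarrow> s \<le> t \<Longrightarrow> t < b \<Longrightarrow> f s \<le> f t"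
    and ps: "\<And>t. a < t \<Longrightarrow> t < b \<Longrightarrow> 0 < f t"
  shows "0 < integral {a..b} f"
proof -
  define m where "m = (a + b) / 2"
  have m: "a < m" "m < b" using ab by (auto simp: m_def)
  have "integral {a..m} f + integral {m..b} f = integral {a..b} f"
    using Henstock_Kurzweil_Integration.integral_combine[where a=a and c=m and b=b and f=f] m fi by auto
  moreover have "f m * (b - m) \<le> integral {m..b} f"
    by (rule int_ge_interior) (use m fi mo in \<open>auto intro: integrable_on_subinterval\<close>)
  moreover have "0 * (m - a) \<le> integral {a..m} f"
    by (rule int_ge_interior) (use m fi ps in \<open>auto intro: integrable_on_subinterval less_imp_le\<close>)
  moreover have "0 < f m * (b - m)" using ps[of m] m by simp
  ultimately show ?thesis by linarith
qed


lemma chasles: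
  fixes f :: "real \<Rightarrow> real"
  assumes fi: "\<And>a b. f integrable_on {a..b}"
  defines "I \<equiv> (\<lambda>a b. if a \<le> b then integral {a..b} f else - integral {b..a} f)"
  shows "I a c = I a b + I b c"
proof -
  have C: "\<And>p q r. p \<le> q \<Longrightarrow> q \<le> r \<Longrightarrow> integral {p..q} f + integral {q..r} f = integral {p..r} f"
    using Henstock_Kurzweil_Integration.integral_combine fi by blast
  show ?thesis unfolding I_def
    using C[of a b c] C[of a c b] C[of b a c] C[of b c a] C[of c a b] C[of c b a]
    by (cases "a \<le> b"; cases "b \<le> c"; cases "a \<le> c") auto
qed


theorem mainTheorem6:
  fixes g :: "real \<Rightarrow> real" and w b c t1 t2 :: real and \<delta> :: "real \<Rightarrow> real"
  assumes dens: "is_density g"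
    and w: "0 \<le> w" "w \<le> 1" and b: "0 < b"
    and median: "\<forall>x. is_posterior_median g w b c x (\<delta> x)"
    and cont: "continuous_on UNIV \<delta>"
    and t_pos: "0 < t1" "0 < t2"
    and zero: "\<forall>x. \<delta> x = 0 \<longleftrightarrow> (- t2 \<le> x \<and> x \<le> t1)"
    and mono_r: "strict_mono_on {t1<..} \<delta>"
    and mono_l: "strict_mono_on {..< - t2} \<delta>"
    and onto_r: "\<delta> ` {t1<..} = {0<..}"
    and onto_l: "\<delta> ` {..< - t2} = {..<0}"
  shows "(\<forall>\<theta>. (1/2) * (x - \<delta> x)^2 + penalty \<delta> t1 t2 (\<delta> x)
                 \<le> (1/2) * (x - \<theta>)^2 + penalty \<delta> t1 t2 \<theta>)
       \<and> (\<forall>\<theta>. (1/2) * (x - \<theta>)^2 + penalty \<delta> t1 t2 \<theta>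
                 \<le> (1/2) * (x - \<delta> x)^2 + penalty \<delta> t1 t2 (\<delta> x) \<longrightarrow> \<theta> = \<delta> x)"
  
proof -
  define h where "h = delta_inv \<delta> t1 t2"
  define U where "U = {t1<..} \<union> {..< - t2}"
  have pd: "\<And>y. t1 < y \<Longrightarrow> 0 < \<delta> y" using onto_r by auto
  have nd: "\<And>y. y < - t2 \<Longrightarrow> \<delta> y < 0" using onto_l by auto
  have inj: "inj_on \<delta> U"
  proof (rule inj_onI)
    fix y z assume y: "y \<in> U" and z: "z \<in> U" and e: "\<delta> y = \<delta> z"
    show "y = z"
    proof (rule ccontr)
      assume "y \<noteq> z"
      then consider "y < z" | "z < y" by linarith
      then show False
      proof cases
        case 1 then show False using y z e pd nd strict_mono_onD[OF mono_r, of y z] strict_mono_onD[OF mono_l, of y z]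
          unfolding U_def by (auto, smt (verit))
      next
        case 2 then show False using y z e pd nd strict_mono_onD[OF mono_r, of z y] strict_mono_onD[OF mono_l, of z y]
          unfolding U_def by (auto, smt (verit))
      qed
    qed
  qed
  have hpos: "t1 < h s \<and> \<delta> (h s) = s" if s: "0 < s" for s
  proof -
    obtain y where y: "t1 < y" "\<delta> y = s" using onto_r s by (metis greaterThan_iff imageE)
    have "h s = y" unfolding h_def delta_inv_def using the_inv_into_f_eq[OF inj, of y s] y by (simp add: U_def)
    then show ?thesis using y by simp
  qed
  have hneg: "h s < - t2 \<and> \<delta> (h s) = s" if s: "s < 0" for s
  proof -
    obtain y where y: "y < - t2" "\<delta> y = s" using onto_l s by (metis lessThan_iff imageE)
    have "h s = y" unfolding h_def delta_inv_def using the_inv_into_f_eq[OF inj, of y s] y by (simp add: U_def)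
    then show ?thesis using y by simp
  qed
  have hinv: "h (\<delta> y) = y" if "y \<in> U" for y
    unfolding h_def delta_inv_def using the_inv_into_f_f[OF inj that] by (simp add: U_def)
  define g where "g t = (if t = 0 then 0 else h t)" for t
  have gsm: "g s < g t" if st: "s < t" for s t
  proof -
    consider "s < 0" "t < 0" | "s < 0" "t = 0" | "s < 0" "t > 0" | "s = 0" "t > 0" | "s > 0" "t > 0"
      using st by linarith
    then show ?thesis
    proof cases
      case 1
      show ?thesis
      proof (rule ccontr)
        assume "\<not> g s < g t"
        then have "h t \<le> h s" using 1 by (simp add: g_def)
        then have "\<delta> (h t) \<le> \<delta> (h s)"
          using strict_mono_onD[OF mono_l, of "h t" "h s"] hneg[OF 1(1)] hneg[OF 1(2)]
          by (cases "h t = h s") auto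
        then show False using hneg[OF 1(1)] hneg[OF 1(2)] st by simp
      qed
    next
      case 2 then show ?thesis using hneg[of s] t_pos by (simp add: g_def)
    next
      case 3 then show ?thesis using hneg[of s] hpos[of t] t_pos by (simp add: g_def)
    next
      case 4 then show ?thesis using hpos[of t] t_pos by (simp add: g_def)
    next
      case 5
      show ?thesis
      proof (rule ccontr)
        assume "\<not> g s < g t"
        then have "h t \<le> h s" using 5 by (simp add: g_def)
        then have "\<delta> (h t) \<le> \<delta> (h s)"
          using strict_mono_onD[OF mono_r, of "h t" "h s"] hpos[OF 5(1)] hpos[OF 5(2)]
          by (cases "h t = h s") auto
        then show False using hpos[OF 5(1)] hpos[OF 5(2)] st by simp
      qed
    qed
  qed
  define f where "f t = g t - x" for t
  have fmono: "f s \<le> f t" if "s \<le> t" for s t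
    using gsm[of s t] that by (cases "s = t") (auto simp: f_def)
  have gi: "g integrable_on {a..b}" for a b
    by (rule integrable_on_mono_on) (auto simp: mono_on_def intro: gsm less_imp_le dest: le_imp_less_or_eq)
  have fi: "f integrable_on {a..b}" for a b
    unfolding f_def using gi by (intro integrable_diff) auto
  have hgi: "integral {a..b} (\<lambda>t. h t - t) = integral {a..b} (\<lambda>t. g t - t)" for a b
    by (rule integral_spike[of "{0}"]) (auto simp: g_def)
  have ig: "integral {a..b} f = integral {a..b} (\<lambda>t. g t - t) + (b^2 - a^2)/2 - x * (b - a)"
    if ab: "a \<le> b" for a b
  proof -
    have "integral {a..b} f = integral {a..b} (\<lambda>t. (g t - t) + (t - x))" by (simp add: f_def[abs_def])
    also have "\<dots> = integral {a..b} (\<lambda>t. g t - t) + integral {a..b} (\<lambda>t. t - x)"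
      by (rule integral_add) (use gi ident_integrable_on in \<open>auto intro!: integrable_diff\<close>)
    also have "integral {a..b} (\<lambda>t. t - x) = (b^2 - a^2)/2 - x * (b - a)"
      using ab by (subst integral_diff) (auto simp: ident_integrable_on)
    finally show ?thesis by simp
  qed
  define I where "I = (\<lambda>a b. if a \<le> b then integral {a..b} f else - integral {b..a} f)"
  have chas: "I a c = I a b + I b c" for a b c
    unfolding I_def by (rule chasles[of f a c b, unfolded Let_def]) (rule fi)
  have Fexp: "(1/2) * (x - \<theta>)^2 + penalty \<delta> t1 t2 \<theta> = x^2/2 + I 0 \<theta>" for \<theta>
  proof (cases "0 \<le> \<theta>")
    case True
    then show ?thesis
      using ig[of 0 \<theta>] hgi[of 0 \<theta>]
      by (cases "\<theta> = 0") (auto simp: I_def penalty_def h_def[symmetric] power2_eq_square algebra_simps)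
  next
    case False
    then show ?thesis
      using ig[of \<theta> 0] hgi[of \<theta> 0]
      by (auto simp: I_def penalty_def h_def[symmetric] power2_eq_square algebra_simps)
  qed
  define ts where "ts = \<delta> x"
  have S: "(t < ts \<longrightarrow> f t < 0) \<and> (ts < t \<longrightarrow> 0 < f t)" for t
  proof -
    consider "x > t1" | "- t2 \<le> x \<and> x \<le> t1" | "x < - t2" by linarith
    then show ?thesis
    proof cases
      case 1
      then have "0 < ts" "h ts = x" using pd[OF 1] hinv[of x] by (auto simp: ts_def U_def)
      then have "g ts = x" by (simp add: g_def)
      then show ?thesis using gsm[of t ts] gsm[of ts t] by (auto simp: f_def)
    next
      case 2
      then have "ts = 0" using zero by (simp add: ts_def)
      then show ?thesis using 2 hpos[of t] hneg[of t] by (auto simp: f_def g_def)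
    next
      case 3
      then have "ts < 0" "h ts = x" using nd[OF 3] hinv[of x] by (auto simp: ts_def U_def)
      then have "g ts = x" by (simp add: g_def)
      then show ?thesis using gsm[of t ts] gsm[of ts t] by (auto simp: f_def)
    qed
  qed
  have strict: "I 0 ts < I 0 \<theta>" if ne: "\<theta> \<noteq> ts" for \<theta>
  proof -
    have "I 0 \<theta> = I 0 ts + I ts \<theta>" by (rule chas)
    moreover have "0 < I ts \<theta>"
    proof (cases "ts < \<theta>")
      case True
      then have "0 < integral {ts..\<theta>} f"
        by (intro int_pos) (use fi fmono S in auto)
      then show ?thesis using True by (simp add: I_def)
    next
      case False
      then have lt: "\<theta> < ts" using ne by simp
      then have "integral {\<theta>..ts} f < 0"
        by (intro int_neg) (use fi fmono S in auto)
      then show ?thesis using lt by (simp add: I_def)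
    qed
    ultimately show ?thesis by simp
  qed
  show ?thesis
    unfolding Fexp ts_def[symmetric]
    using strict by (smt (verit))
qed

end
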